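(* Let $\Gamma$ be a modular pattern. There is an integer $m$ such that whenever two ideal triangles $\tau_1,\tau_2$ of the modular tiling have combinatorial distance at least $m$, at most one geodesic of $\Gamma$ intersects both $\tau_1$ and $\tau_2$.
   Context: A modular pattern is a $PSL_2(\mathbb Z)$-invariant collection $\Gamma$ of complete geodesics in $\mathbf H^2$ with finitely many $PSL_2(\mathbb Z)$-orbits, each geodesic stabilized by an infinite-order subgroup of $PSL_2(\mathbb Z)$. The modular tiling $T$ is the $PSL_2(\mathbb Z)$-invariant tiling of $\mathbf H^2$ by ideal triangles generated by reflections in the sides of the ideal triangle with vertices $0,1,\infty$ (upper half-plane). The combinatorial distance between two ideal triangles of $T$ is the number of edges of $T$ crossed by the geodesic segment joining their centers. *)

theory Defs
  imports Complex_Main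
begin

definition uhp :: "complex set" where
  "uhp = {z. 0 < Im z}"

definition hdist :: "complex \<Rightarrow> complex \<Rightarrow> real" where
  "hdist z w = arcosh (1 + (cmod (z - w))^2 / (2 * Im z * Im w))"

definition hseg :: "complex \<Rightarrow> complex \<Rightarrow> complex set" where
  "hseg z w = {u \<in> uhp. hdist z u + hdist u w = hdist z w}"

definition vline :: "real \<Rightarrow> complex set" where
  "vline a = {z \<in> uhp. Re z = a}"

definition hcirc :: "real \<Rightarrow> real \<Rightarrow> complex set" where
  "hcirc c r = {z \<in> uhp. cmod (z - complex_of_real c) = r}"

definition complete_geodesic :: "complex set \<Rightarrow> bool" where
  "complete_geodesic L \<longleftrightarrow> (\<exists>a. L = vline a) \<or> (\<exists>c r. 0 < r \<and> L = hcirc c r)"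

text \<open>Elements of SL(2,Z) as integer quadruples (a,b,c,d); PSL(2,Z) acts through them.\<close>
type_synonym imat = "int \<times> int \<times> int \<times> int"

definition SL2Z :: "imat set" where
  "SL2Z = {(a,b,c,d). a * d - b * c = 1}"

fun mob :: "imat \<Rightarrow> complex \<Rightarrow> complex" where
  "mob (a,b,c,d) z = (of_int a * z + of_int b) / (of_int c * z + of_int d)"

text \<open>PSL(2,Z) = SL(2,Z)/{+-I}; an element g stabilizes a set when its Moebius map does.\<close>
definition stabilizer :: "complex set \<Rightarrow> imat set" where
  "stabilizer L = {g \<in> SL2Z. mob g ` L = L}"

definition modular_pattern :: "complex set set \<Rightarrow> bool" where
  "modular_pattern \<Gamma> \<longleftrightarrow>
     (\<forall>L\<in>\<Gamma>. complete_geodesic L) \<and>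
     (\<forall>g\<in>SL2Z. \<forall>L\<in>\<Gamma>. mob g ` L \<in> \<Gamma>) \<and>
     (\<exists>F. finite F \<and> F \<subseteq> \<Gamma> \<and> (\<forall>L\<in>\<Gamma>. \<exists>g\<in>SL2Z. \<exists>K\<in>F. L = mob g ` K)) \<and>
     (\<forall>L\<in>\<Gamma>. infinite (stabilizer L))"

text \<open>The (closed) ideal triangle with vertices 0, 1, infinity and its three sides.\<close>
definition T0 :: "complex set" where
  "T0 = {z \<in> uhp. 0 \<le> Re z \<and> Re z \<le> 1 \<and> cmod (z - complex_of_real (1/2)) \<ge> 1/2}"

definition T0_sides :: "complex set set" where
  "T0_sides = {vline 0, vline 1, hcirc (1/2) (1/2)}"

definition T0_center :: complex where
  "T0_center = Complex (1/2) (sqrt 3 / 2)"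

definition reflV :: "real \<Rightarrow> complex \<Rightarrow> complex" where
  "reflV a z = complex_of_real (2 * a) - cnj z"

definition reflC :: "real \<Rightarrow> real \<Rightarrow> complex \<Rightarrow> complex" where
  "reflC c r z = complex_of_real c + complex_of_real (r^2) / cnj (z - complex_of_real c)"

definition T0_reflections :: "(complex \<Rightarrow> complex) set" where
  "T0_reflections = {reflV 0, reflV 1, reflC (1/2) (1/2)}"

inductive_set refl_group :: "(complex \<Rightarrow> complex) set" where
  id_in: "id \<in> refl_group"
| step: "f \<in> refl_group \<Longrightarrow> r \<in> T0_reflections \<Longrightarrow> f \<circ> r \<in> refl_group"

text \<open>Tiles of the modular tiling are the sets f ` T0 with f in the reflection group,
  with center f T0_center; its edges are the complete geodesics f ` (side of T0).\<close>
definition tiling_edges :: "complex set set" where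
  "tiling_edges = {f ` S | f S. f \<in> refl_group \<and> S \<in> T0_sides}"

definition comb_dist :: "(complex \<Rightarrow> complex) \<Rightarrow> (complex \<Rightarrow> complex) \<Rightarrow> nat" where
  "comb_dist f1 f2 =
     card {E \<in> tiling_edges. E \<inter> hseg (f1 T0_center) (f2 T0_center) \<noteq> {}}"

end

theory Submission
  imports Defs
begin

fun mmul :: "imat \<Rightarrow> imat \<Rightarrow> imat" where
  "mmul (a,b,c,d) (e,f,g,h) = (a*e+b*g, a*f+b*h, c*e+d*g, c*f+d*h)"
fun minv :: "imat \<Rightarrow> imat" where
  "minv (a,b,c,d) = (d,-b,-c,a)"
fun mtr :: "imat \<Rightarrow> int" where
  "mtr (a,b,c,d) = a + d"

fun fcomp :: "('a::comm_ring_1) \<times> 'a \<times> 'a \<Rightarrow> imat \<Rightarrow> 'a \<times> 'a \<times> 'a" where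
  "fcomp (A,B,C) (a,b,c,d) =
    (A*of_int a^2 + B*of_int a*of_int c + C*of_int c^2,
     2*A*of_int a*of_int b + B*(of_int a*of_int d + of_int b*of_int c) + 2*C*of_int c*of_int d,
     A*of_int b^2 + B*of_int b*of_int d + C*of_int d^2)"

fun fdisc :: "('a::comm_ring_1) \<times> 'a \<times> 'a \<Rightarrow> 'a" where
  "fdisc (A,B,C) = B^2 - 4*A*C"

fun ofi :: "int \<times> int \<times> int \<Rightarrow> real \<times> real \<times> real" where
  "ofi (A,B,C) = (of_int A, of_int B, of_int C)"

lemma fcomp_ofi: "fcomp (ofi Q) M = ofi (fcomp Q M)"
  by (cases Q; cases M) simp

lemma fdisc_ofi: "fdisc (ofi Q) = of_int (fdisc Q)"
  by (cases Q) simp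

lemma fcomp_mmul: "fcomp Q (mmul M N) = fcomp (fcomp Q M) N"
  by (cases Q; cases M; cases N) (simp add: algebra_simps power2_eq_square)

lemma fcomp_id: "fcomp Q (1,0,0,1) = Q"
  by (cases Q) simp

lemma fcomp_neg: "fcomp Q (-a,-b,-c,-d) = fcomp Q (a,b,c,d)"
  by (cases Q) simp

lemma fdisc_fcomp: "fdisc (fcomp Q (a,b,c,d)) = of_int (a*d-b*c)^2 * fdisc Q"
  by (cases Q) (simp add: algebra_simps power2_eq_square)

lemma i11:
  fixes A B C a b c d :: real
  shows "2*(C*c + A*b) = a*((2*A*a*b + B*(a*d+b*c) + 2*C*c*d) - B) - 2*b*((A*a^2 + B*a*c + C*c^2) - A) - (a*d-b*c-1)*(B*a+2*C*c)"
  by algebra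
lemma i12:
  fixes A B C a b c d :: real
  shows "2*(B*b - C*(a-d)) = a*2*((A*b^2 + B*b*d + C*d^2) - C) - b*((2*A*a*b + B*(a*d+b*c) + 2*C*c*d) - B) - (a*d-b*c-1)*(B*b+2*C*d)"
  by algebra
lemma i21:
  fixes A B C a b c d :: real
  shows "-2*(A*(a-d) + B*c) = c*((2*A*a*b + B*(a*d+b*c) + 2*C*c*d) - B) - 2*d*((A*a^2 + B*a*c + C*c^2) - A) - (a*d-b*c-1)*(-2*A*a-B*c)"
  by algebra

lemma fix_plus:
  fixes A B C :: real
  assumes "fcomp (A,B,C) (a,b,c,d) = (A,B,C)" "a*d-b*c = 1"
  shows "B*of_int b = C*(of_int a - of_int d) \<and> C*of_int c = -A*of_int b \<and> B*of_int c = -A*(of_int a - of_int d)"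
proof -
  have d: "real_of_int a * real_of_int d - real_of_int b * real_of_int c = 1"
    using assms(2) by (metis of_int_1 of_int_diff of_int_mult)
  have e: "A*of_int a^2 + B*of_int a*of_int c + C*of_int c^2 = A"
     "2*A*of_int a*of_int b + B*(of_int a*of_int d + of_int b*of_int c) + 2*C*of_int c*of_int d = B"
     "A*of_int b^2 + B*of_int b*of_int d + C*of_int d^2 = C" using assms(1) by simp_all
  show ?thesis
    using i11[of C "of_int c" A "of_int b" "of_int a" B "of_int d"]
      i12[of B "of_int b" C "of_int a" "of_int d" A "of_int c"]
      i21[of A "of_int a" "of_int d" B "of_int c" "of_int b" C] e d
    by simp
qed

lemma fix_minus:
  fixes A B C :: real
  assumes "fcomp (A,B,C) (a,b,c,d) = (-A,-B,-C)" "a*d-b*c = 1"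
  shows "(of_int a + of_int d)*A = 0 \<and> (of_int a + of_int d)*B = 0 \<and> (of_int a + of_int d)*C = 0"
proof -
  have d: "real_of_int a * real_of_int d - real_of_int b * real_of_int c = 1"
    using assms(2) by (metis of_int_1 of_int_diff of_int_mult)
  show ?thesis using assms(1) d by simp algebra
qed

definition den :: "imat \<Rightarrow> complex \<Rightarrow> real" where
  "den M z = (case M of (a,b,c,d) \<Rightarrow> (of_int c * Re z + of_int d)^2 + (of_int c * Im z)^2)"

lemma SL2Z_iff: "(a,b,c,d) \<in> SL2Z \<longleftrightarrow> a*d - b*c = 1"
  by (simp add: SL2Z_def)

lemma den_pos:
  assumes "(a,b,c,d) \<in> SL2Z" "Im z > 0"
  shows "den (a,b,c,d) z > 0"
proof (cases "c = 0")
  case True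
  then have "d \<noteq> 0" using assms(1) by (auto simp: SL2Z_def)
  then show ?thesis using True by (simp add: den_def)
next
  case False
  then have "(of_int c * Im z)^2 > 0" using assms(2) by simp
  then show ?thesis by (simp add: den_def add_nonneg_pos)
qed

lemma mob_Re:
  assumes "den (a,b,c,d) z \<noteq> 0"
  shows "Re (mob (a,b,c,d) z) = (of_int a * of_int c * ((Re z)^2 + (Im z)^2) + (of_int a * of_int d + of_int b * of_int c) * Re z + of_int b * of_int d) / den (a,b,c,d) z"
  using assms by (simp add: den_def Re_divide field_simps power2_eq_square)

lemma mob_Im:
  assumes "den (a,b,c,d) z \<noteq> 0"
  shows "Im (mob (a,b,c,d) z) = (of_int a * of_int d - of_int b * of_int c) * Im z / den (a,b,c,d) z"
  using assms by (simp add: den_def Im_divide field_simps power2_eq_square)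

lemma den_ne: "M \<in> SL2Z \<Longrightarrow> Im z > 0 \<Longrightarrow> den M z \<noteq> 0"
  by (cases M) (metis den_pos less_irrefl)

lemma denom_ne:
  assumes "(a,b,c,d) \<in> SL2Z" "Im z > 0"
  shows "of_int c * z + of_int d \<noteq> 0"
proof
  assume h: "of_int c * z + of_int d = 0"
  have "Im (of_int c * z + of_int d) = of_int c * Im z" by simp
  then have "of_int c * Im z = 0" using h by simp
  then have "c = 0" using assms(2) by simp
  then have "d = 0" using h by simp
  then show False using assms(1) \<open>c = 0\<close> by (simp add: SL2Z_def)
qed

lemma mob_Im_pos:
  assumes "M \<in> SL2Z" "Im z > 0"
  shows "Im (mob M z) > 0"
proof -
  obtain a b c d where M: "M = (a,b,c,d)" by (cases M) auto
  have det: "a*d - b*c = 1" using assms(1) M by (simp add: SL2Z_def)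
  then have "real_of_int a * real_of_int d - real_of_int b * real_of_int c = 1"
    by (metis of_int_1 of_int_diff of_int_mult)
  then show ?thesis using mob_Im[of a b c d z] den_pos[of a b c d z] assms M by simp
qed

lemma mob_uhp: "M \<in> SL2Z \<Longrightarrow> z \<in> uhp \<Longrightarrow> mob M z \<in> uhp"
  using mob_Im_pos by (simp add: uhp_def)

lemma det_mult: "((a::int)*e+b*g)*(c*f+d*h) - (a*f+b*h)*(c*e+d*g) = (a*d-b*c)*(e*h-f*g)"
  by algebra

lemma mmul_SL2Z: "M \<in> SL2Z \<Longrightarrow> N \<in> SL2Z \<Longrightarrow> mmul M N \<in> SL2Z"
  by (cases M; cases N) (simp add: SL2Z_def det_mult)

lemma minv_SL2Z: "M \<in> SL2Z \<Longrightarrow> minv M \<in> SL2Z"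
  by (cases M) (simp add: SL2Z_def algebra_simps)

lemma mob_mmul:
  assumes "M \<in> SL2Z" "N \<in> SL2Z" "Im z > 0"
  shows "mob M (mob N z) = mob (mmul M N) z"
proof -
  obtain a b c d where M: "M = (a,b,c,d)" by (cases M) auto
  obtain e f g h where N: "N = (e,f,g,h)" by (cases N) auto
  have n1: "of_int g * z + of_int h \<noteq> 0" using denom_ne assms N by blast
  have w: "Im (mob N z) > 0" using mob_Im_pos assms by blast
  have n2: "of_int c * mob N z + of_int d \<noteq> 0" using denom_ne[of a b c d "mob N z"] assms(1) M w by blast
  have n2': "of_int c * (of_int e * z + of_int f) + of_int d * (of_int g * z + of_int h) \<noteq> 0"
    using n2 n1 by (simp add: N field_simps)
  show ?thesis using n1 n2' apply (simp add: M N divide_simps) apply algebra done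
qed

lemma mmul_minv: "M \<in> SL2Z \<Longrightarrow> mmul M (minv M) = (1,0,0,1)"
  by (cases M) (simp add: SL2Z_def algebra_simps)
lemma minv_mmul: "M \<in> SL2Z \<Longrightarrow> mmul (minv M) M = (1,0,0,1)"
  by (cases M) (simp add: SL2Z_def algebra_simps)

lemma mob_id: "mob (1,0,0,1) z = z" by simp

lemma mob_minv1: "M \<in> SL2Z \<Longrightarrow> Im z > 0 \<Longrightarrow> mob M (mob (minv M) z) = z"
  by (simp add: mob_mmul minv_SL2Z mmul_minv)
lemma mob_minv2: "M \<in> SL2Z \<Longrightarrow> Im z > 0 \<Longrightarrow> mob (minv M) (mob M z) = z"
  by (simp add: mob_mmul minv_SL2Z minv_mmul)

fun Qval :: "real \<times> real \<times> real \<Rightarrow> complex \<Rightarrow> real" where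
  "Qval (A,B,C) z = A*((Re z)^2 + (Im z)^2) + B * Re z + C"

definition geo :: "real \<times> real \<times> real \<Rightarrow> complex set" where
  "geo Q = {z \<in> uhp. Qval Q z = 0}"

lemma lagrange_id:
  fixes a b c d x y :: real
  shows "(a*c*(x^2+y^2) + (a*d+b*c)*x + b*d)^2 + ((a*d-b*c)*y)^2 = ((a*x+b)^2 + (a*y)^2) * ((c*x+d)^2 + (c*y)^2)"
  by algebra

lemma sq_div_add: "((p::real)/D)^2 + (q/D)^2 = (p^2+q^2)/D^2"
  by (simp add: power_divide add_divide_distrib)

lemma Qval_real:
  fixes a b c d x y A B C :: real
  assumes "a*d-b*c = 1" "Dn = (c*x+d)^2 + (c*y)^2" "Dn \<noteq> 0"
  shows "(A*(((a*c*(x^2+y^2) + (a*d+b*c)*x + b*d)/Dn)^2 + ((a*d-b*c)*y/Dn)^2) + B*((a*c*(x^2+y^2) + (a*d+b*c)*x + b*d)/Dn) + C) * Dn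
     = (A*a^2 + B*a*c + C*c^2)*(x^2+y^2) + (2*A*a*b + B*(a*d+b*c) + 2*C*c*d)*x + (A*b^2 + B*b*d + C*d^2)"
proof -
  have "((a*c*(x^2+y^2) + (a*d+b*c)*x + b*d)/Dn)^2 + ((a*d-b*c)*y/Dn)^2
      = ((a*c*(x^2+y^2) + (a*d+b*c)*x + b*d)^2 + ((a*d-b*c)*y)^2) / Dn^2"
    by (rule sq_div_add)
  also have "\<dots> = ((a*x+b)^2 + (a*y)^2) / Dn"
    using lagrange_id[of a c x y d b] assms(2,3) by (simp add: power2_eq_square)
  finally have e: "((a*c*(x^2+y^2) + (a*d+b*c)*x + b*d)/Dn)^2 + ((a*d-b*c)*y/Dn)^2 = ((a*x+b)^2 + (a*y)^2) / Dn" .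
  have f: "(A*(P/Dn) + B*(N/Dn) + C)*Dn = A*P + B*N + C*Dn" for P N
    using assms(3) by (simp add: field_simps)
  show ?thesis unfolding e f unfolding assms(2) by algebra
qed

lemma Qval_mob:
  assumes "M \<in> SL2Z" "Im z > 0"
  shows "Qval Q (mob M z) * den M z = Qval (fcomp Q M) z"
proof -
  obtain a b c d where M: "M = (a,b,c,d)" by (cases M) auto
  obtain A B C where Q: "Q = (A,B,C)" by (cases Q) auto
  have det: "real_of_int a * real_of_int d - real_of_int b * real_of_int c = 1"
    using assms(1) M by (simp add: SL2Z_def) (metis of_int_1 of_int_diff of_int_mult)
  have dn: "den M z \<noteq> 0" using den_ne assms by blast
  have dd: "den M z = (of_int c * Re z + of_int d)^2 + (of_int c * Im z)^2" by (simp add: M den_def)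
  show ?thesis
    unfolding M Q Qval.simps fcomp.simps mob_Re[OF dn[unfolded M]] mob_Im[OF dn[unfolded M]]
    using Qval_real[OF det dd[unfolded M] dn[unfolded M], of A B C] by simp
qed

lemma geo_image:
  assumes "N \<in> SL2Z"
  shows "mob N ` geo (fcomp Q N) = geo Q"
proof
  show "mob N ` geo (fcomp Q N) \<subseteq> geo Q"
  proof
    fix w assume "w \<in> mob N ` geo (fcomp Q N)"
    then obtain z where z: "z \<in> geo (fcomp Q N)" "w = mob N z" by auto
    have zi: "Im z > 0" using z(1) by (simp add: geo_def uhp_def)
    have "Qval Q (mob N z) * den N z = 0" using Qval_mob[OF assms zi, of Q] z(1) by (simp add: geo_def)
    then have "Qval Q w = 0" using den_ne[OF assms zi] z(2) by simp
    moreover have "w \<in> uhp" using mob_uhp[OF assms] z by (simp add: geo_def)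
    ultimately show "w \<in> geo Q" by (simp add: geo_def)
  qed
next
  show "geo Q \<subseteq> mob N ` geo (fcomp Q N)"
  proof
    fix w assume w: "w \<in> geo Q"
    have wi: "Im w > 0" using w by (simp add: geo_def uhp_def)
    let ?z = "mob (minv N) w"
    have zi: "Im ?z > 0" using mob_Im_pos[OF minv_SL2Z[OF assms] wi] .
    have e: "mob N ?z = w" using mob_minv1[OF assms wi] .
    have "Qval (fcomp Q N) ?z = Qval Q w * den N ?z" using Qval_mob[OF assms zi, of Q] e by simp
    then have "Qval (fcomp Q N) ?z = 0" using w by (simp add: geo_def)
    then have "?z \<in> geo (fcomp Q N)" using zi by (simp add: geo_def uhp_def)
    then show "w \<in> mob N ` geo (fcomp Q N)" using e by force
  qed
qed

fun smul :: "real \<Rightarrow> real \<times> real \<times> real \<Rightarrow> real \<times> real \<times> real" where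
  "smul k (A,B,C) = (k*A, k*B, k*C)"

lemma Qval_smul: "Qval (smul k Q) z = k * Qval Q z"
  by (cases Q) (simp add: algebra_simps)

lemma geo_smul: "k \<noteq> 0 \<Longrightarrow> geo (smul k Q) = geo Q"
  by (simp add: geo_def Qval_smul)

lemma fdisc_smul: "fdisc (smul k Q) = k^2 * fdisc Q"
  by (cases Q) (simp add: algebra_simps power2_eq_square)

lemma vline_geo: "vline a = geo (0,1,-a)"
  by (auto simp: vline_def geo_def)

lemma hcirc_geo:
  assumes "r > 0"
  shows "hcirc c r = geo (1, -2*c, c^2 - r^2)"
proof -
  have "cmod (z - complex_of_real c) = r \<longleftrightarrow> (Re z - c)^2 + (Im z)^2 = r^2" for z
  proof -
    have "cmod (z - complex_of_real c) = sqrt ((Re z - c)^2 + (Im z)^2)"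
      by (simp add: cmod_def)
    then show ?thesis using assms
      by (metis abs_of_pos real_sqrt_abs real_sqrt_ge_zero sum_power2_ge_zero real_sqrt_pow2)
  qed
  then show ?thesis
    by (auto simp: hcirc_def geo_def algebra_simps power2_eq_square)
qed

lemma complete_geo:
  assumes "complete_geodesic L"
  shows "\<exists>G p1 p2. L = geo G \<and> fdisc G > 0 \<and> p1 \<in> L \<and> p2 \<in> L \<and> p1 \<noteq> p2"
proof -
  { fix a assume L: "L = vline a"
    have "L = geo (0,1,-a)" using L vline_geo by simp
    moreover have "Complex a 1 \<in> L" "Complex a 2 \<in> L" using L by (auto simp: vline_def uhp_def)
    ultimately have ?thesis by (intro exI[of _ "(0,1,-a)"] exI[of _ "Complex a 1"] exI[of _ "Complex a 2"]) auto }
  moreover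
  { fix c r assume r: "r > 0" and L: "L = hcirc c r"
    have "L = geo (1, -2*c, c^2 - r^2)" using L hcirc_geo r by simp
    moreover have "Complex c r \<in> L" "Complex (c + 3*r/5) (4*r/5) \<in> L"
      using r unfolding \<open>L = geo _\<close> by (auto simp: geo_def uhp_def algebra_simps power2_eq_square)
    moreover have "fdisc (1, -2*c, c^2 - r^2) > 0" using r by (simp add: algebra_simps power2_eq_square)
    moreover have "Complex c r \<noteq> Complex (c + 3*r/5) (4*r/5)" using r by simp
    ultimately have ?thesis by blast }
  ultimately show ?thesis using assms unfolding complete_geodesic_def by blast
qed

lemma prop_lemma:
  fixes A B C A' B' C' s t n1 x1 :: real
  assumes "(s,t) \<noteq> (0,0)" "A*s + B*t = 0" "A'*s + B'*t = 0"
    "C = -A*n1 - B*x1" "C' = -A'*n1 - B'*x1" "(A,B,C) \<noteq> (0,0,0)"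
  shows "\<exists>k. A' = k*A \<and> B' = k*B \<and> C' = k*C"
proof (cases "t = 0")
  case True
  then have s: "s \<noteq> 0" using assms(1) by simp
  then have "A = 0" "A' = 0" using assms(2,3) True by simp_all
  then have "B \<noteq> 0" using assms(4,6) by auto
  show ?thesis
    by (rule exI[of _ "B'/B"]) (use \<open>B \<noteq> 0\<close> \<open>A = 0\<close> \<open>A' = 0\<close> assms(4,5) in \<open>auto simp: field_simps\<close>)
next
  case False
  then have b: "B = -A*s/t" "B' = -A'*s/t" using assms(2,3) by (simp_all add: field_simps)
  then have "A \<noteq> 0" using assms(4,6) by auto
  have c: "C = A*(-n1 + s*x1/t)" "C' = A'*(-n1 + s*x1/t)" using assms(4,5) b by (simp_all add: algebra_simps)
  show ?thesis
  proof (rule exI[of _ "A'/A"], intro conjI)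
    show "A' = A'/A*A" using \<open>A \<noteq> 0\<close> by simp
    show "B' = A'/A*B" using \<open>A \<noteq> 0\<close> b by (simp add: field_simps)
    show "C' = A'/A*C" unfolding c using \<open>A \<noteq> 0\<close> by simp
  qed
qed

lemma two_points_prop:
  assumes "p1 \<in> geo G" "p2 \<in> geo G" "p1 \<noteq> p2" "Qval H p1 = 0" "Qval H p2 = 0" "G \<noteq> (0,0,0)"
  shows "\<exists>k. H = smul k G"
proof -
  obtain A B C where G: "G = (A,B,C)" by (cases G) auto
  obtain A' B' C' where H: "H = (A',B',C')" by (cases H) auto
  let ?n1 = "(Re p1)^2 + (Im p1)^2" and ?n2 = "(Re p2)^2 + (Im p2)^2"
  have e1: "A*?n1 + B*Re p1 + C = 0" "A*?n2 + B*Re p2 + C = 0" using assms(1,2) G by (simp_all add: geo_def)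
  have e2: "A'*?n1 + B'*Re p1 + C' = 0" "A'*?n2 + B'*Re p2 + C' = 0" using assms(4,5) H by simp_all
  have st: "(?n1 - ?n2, Re p1 - Re p2) \<noteq> (0,0)"
  proof
    assume h: "(?n1 - ?n2, Re p1 - Re p2) = (0,0)"
    then have "Re p1 = Re p2" by simp
    moreover have "(Im p1)^2 = (Im p2)^2" using h \<open>Re p1 = Re p2\<close> by simp
    moreover have "Im p1 > 0" "Im p2 > 0" using assms(1,2) by (auto simp: geo_def uhp_def)
    ultimately have "Im p1 = Im p2" by (metis power2_eq_iff_nonneg less_imp_le)
    with \<open>Re p1 = Re p2\<close> assms(3) show False by (simp add: complex_eq_iff)
  qed
  have "\<exists>k. A' = k*A \<and> B' = k*B \<and> C' = k*C"
    apply (rule prop_lemma[OF st, of A B A' B' C ?n1 "Re p1" C'])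
    using e1 e2 assms(6) G by (auto simp: algebra_simps)
  then show ?thesis using G H by auto
qed

fun Fg :: "imat \<Rightarrow> int \<times> int \<times> int" where
  "Fg (a,b,c,d) = (-c, a-d, b)"

fun mneg :: "imat \<Rightarrow> imat" where
  "mneg (a,b,c,d) = (-a,-b,-c,-d)"

lemma fdisc_Fg: "g \<in> SL2Z \<Longrightarrow> fdisc (Fg g) = (mtr g)^2 - 4"
  by (cases g) (simp add: SL2Z_def algebra_simps power2_eq_square)

lemma cross_prop:
  fixes A B C p q r :: real
  assumes "B*r = C*q" "C*p = A*r" "A*q = B*p" "(p,q,r) \<noteq> (0,0,0)"
  shows "\<exists>m. A = m*p \<and> B = m*q \<and> C = m*r"
proof -
  consider "p \<noteq> 0" | "q \<noteq> 0" | "r \<noteq> 0" using assms(4) by auto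
  then show ?thesis
  proof cases
    case 1 show ?thesis
      by (rule exI[of _ "A/p"]) (use 1 assms in \<open>auto simp: field_simps\<close>)
  next
    case 2 show ?thesis
      by (rule exI[of _ "B/q"]) (use 2 assms in \<open>auto simp: field_simps\<close>)
  next
    case 3 show ?thesis
      by (rule exI[of _ "C/r"]) (use 3 assms in \<open>auto simp: field_simps\<close>)
  qed
qed

lemma plus_class:
  fixes G :: "real \<times> real \<times> real"
  assumes "g \<in> SL2Z" "fcomp G g = G"
  shows "g = (1,0,0,1) \<or> g = (-1,0,0,-1) \<or> (\<exists>m. G = smul m (ofi (Fg g)))"
proof -
  obtain a b c d where g: "g = (a,b,c,d)" by (cases g) auto
  obtain A B C where G: "G = (A,B,C)" by (cases G) auto
  have det: "a*d - b*c = 1" using assms(1) g by (simp add: SL2Z_def)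
  have fp: "B*of_int b = C*(of_int a - of_int d) \<and> C*of_int c = -A*of_int b \<and> B*of_int c = -A*(of_int a - of_int d)"
    using fix_plus[OF assms(2)[unfolded g G] det] .
  show ?thesis
  proof (cases "Fg g = (0,0,0)")
    case True
    then have "c = 0" "b = 0" "a = d" using g by auto
    then have "a*a = 1" using det by simp
    then have "a = 1 \<or> a = -1" using zmult_eq_1_iff by blast
    then show ?thesis using g \<open>c = 0\<close> \<open>b = 0\<close> \<open>a = d\<close> by auto
  next
    case False
    then have nz: "(real_of_int (-c), real_of_int (a-d), real_of_int b) \<noteq> (0,0,0)" using g by auto
    obtain m where "A = m*of_int (-c) \<and> B = m*of_int (a-d) \<and> C = m * of_int b"
      using cross_prop[OF _ _ _ nz, of B C A] fp by (auto simp: algebra_simps)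
    then show ?thesis using g G by auto
  qed
qed

lemma minus_class:
  fixes G :: "real \<times> real \<times> real"
  assumes "g \<in> SL2Z" "fcomp G g = smul (-1) G" "G \<noteq> (0,0,0)"
  shows "mtr g = 0"
proof -
  obtain a b c d where g: "g = (a,b,c,d)" by (cases g) auto
  obtain A B C where G: "G = (A,B,C)" by (cases G) auto
  have det: "a*d - b*c = 1" using assms(1) g by (simp add: SL2Z_def)
  have "(of_int a + of_int d)*A = 0 \<and> (of_int a + of_int d)*B = 0 \<and> (of_int a + of_int d)*C = 0"
    using fix_minus[of A B C a b c d] assms(2) g G det by simp
  then have "real_of_int a + of_int d = 0" using assms(3) G by auto
  then show ?thesis using g by simp
qed

lemma fcomp_smul: "fcomp (smul k G) g = smul k (fcomp G g)"
  by (cases G; cases g) (simp add: algebra_simps)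

lemma smul_ofi_Fg_disc:
  assumes "g \<in> SL2Z" "fdisc (smul m (ofi (Fg g))) > 0"
  shows "(mtr g)^2 > 4"
proof -
  have "fdisc (smul m (ofi (Fg g))) = m^2 * of_int ((mtr g)^2 - 4)"
    using fdisc_Fg[OF assms(1)] by (simp add: fdisc_smul fdisc_ofi)
  then have "m^2 * of_int ((mtr g)^2 - 4) > 0" using assms(2) by simp
  then have "real_of_int ((mtr g)^2 - 4) > 0"
    using zero_le_power2[of m] by (auto simp: zero_less_mult_iff)
  then have "0 < (mtr g)^2 - 4" using of_int_0_less_iff by blast
  then show ?thesis by simp
qed

lemma eps_lemma:
  assumes "L = geo G" "fdisc G > 0" "p1 \<in> L" "p2 \<in> L" "p1 \<noteq> p2" "g \<in> SL2Z" "mob g ` L \<subseteq> L"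
  shows "fcomp G g = G \<or> fcomp G g = smul (-1) G"
proof -
  have G0: "G \<noteq> (0,0,0)" using assms(2) by auto
  have van: "Qval (fcomp G g) p = 0" if "p \<in> L" for p
  proof -
    have pi: "Im p > 0" using that assms(1) by (simp add: geo_def uhp_def)
    have "mob g p \<in> L" using that assms(7) by auto
    then have "Qval G (mob g p) = 0" using assms(1) by (simp add: geo_def)
    then show ?thesis using Qval_mob[OF assms(6) pi, of G] by simp
  qed
  obtain k where k: "fcomp G g = smul k G"
    using two_points_prop[of p1 G p2 "fcomp G g"] assms(1,3,4,5) van G0 by blast
  obtain a b c d where g: "g = (a,b,c,d)" by (cases g) auto
  have det: "a*d - b*c = 1" using assms(6) g by (simp add: SL2Z_def)
  have "fdisc (fcomp G g) = fdisc G" using fdisc_fcomp[of G a b c d] det g by simp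
  then have "k^2 * fdisc G = fdisc G" using k fdisc_smul by metis
  then have "k^2 = 1" using assms(2) by simp
  then have "k = 1 \<or> k = -1" by (metis power2_eq_1_iff)
  moreover have "smul 1 G = G" by (cases G) simp
  ultimately show ?thesis using k by auto
qed

lemma mmul_minv_left0: "mmul (minv (a,b,c,d)) (mmul (a,b,c,d) (e,f,g,h)) = ((a*d-b*c)*e, (a*d-b*c)*f, (a*d-b*c)*g, (a*d-b*c)*h)"
  by (simp add: algebra_simps)

lemma mmul_minv_left: "g \<in> SL2Z \<Longrightarrow> mmul (minv g) (mmul g h) = h"
proof -
  assume "g \<in> SL2Z"
  moreover obtain a b c d where "g = (a,b,c,d)" by (cases g) auto
  moreover obtain e f k l where "h = (e,f,k,l)" by (cases h) auto
  ultimately show ?thesis using mmul_minv_left0[of a b c d e f k l] by (simp add: SL2Z_def)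
qed

lemma exists_hyp:
  assumes "L = geo G" "fdisc G > 0" "p1 \<in> L" "p2 \<in> L" "p1 \<noteq> p2" "infinite (stabilizer L)"
  shows "\<exists>h\<in>SL2Z. (mtr h)^2 > 4 \<and> fcomp G h = G"
proof (rule ccontr)
  assume nh: "\<not> ?thesis"
  have G0: "G \<noteq> (0,0,0)" using assms(2) by auto
  have plus: "g = (1,0,0,1) \<or> g = (-1,0,0,-1)" if "g \<in> SL2Z" "fcomp G g = G" for g
  proof -
    have "\<not> (\<exists>m. G = smul m (ofi (Fg g)))"
    proof
      assume "\<exists>m. G = smul m (ofi (Fg g))"
      then obtain m where "G = smul m (ofi (Fg g))" by blast
      then have "(mtr g)^2 > 4" using smul_ofi_Fg_disc[OF that(1)] assms(2) by simp
      then show False using nh that by blast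
    qed
    then show ?thesis using plus_class[OF that] by blast
  qed
  have cls: "g = (1,0,0,1) \<or> g = (-1,0,0,-1) \<or> (fcomp G g = smul (-1) G \<and> mtr g = 0)" if "g \<in> stabilizer L" for g
  proof -
    have gs: "g \<in> SL2Z" "mob g ` L = L" using that by (auto simp: stabilizer_def)
    have "fcomp G g = G \<or> fcomp G g = smul (-1) G" using eps_lemma[OF assms(1-5) gs(1)] gs(2) by simp
    then show ?thesis using plus[OF gs(1)] minus_class[OF gs(1) _ G0] by blast
  qed
  have "\<not> stabilizer L \<subseteq> {(1,0,0,1), (-1,0,0,-1)}" using assms(6) finite_subset by blast
  then obtain g1 where g1: "g1 \<in> stabilizer L" "g1 \<notin> {(1,0,0,1), (-1,0,0,-1)}" by blast
  have "\<not> stabilizer L \<subseteq> {(1,0,0,1), (-1,0,0,-1), g1, mneg g1}" using assms(6) finite_subset by blast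
  then obtain g2 where g2: "g2 \<in> stabilizer L" "g2 \<notin> {(1,0,0,1), (-1,0,0,-1), g1, mneg g1}" by blast
  have c1: "fcomp G g1 = smul (-1) G" "mtr g1 = 0" using cls[OF g1(1)] g1(2) by auto
  have c2: "fcomp G g2 = smul (-1) G" using cls[OF g2(1)] g2(2) by auto
  have s1: "g1 \<in> SL2Z" and s2: "g2 \<in> SL2Z" using g1 g2 by (auto simp: stabilizer_def)
  have "fcomp G (mmul g1 g2) = G"
    unfolding fcomp_mmul c1 fcomp_smul c2 by (cases G) simp
  then have p: "mmul g1 g2 = (1,0,0,1) \<or> mmul g1 g2 = (-1,0,0,-1)" using plus mmul_SL2Z[OF s1 s2] by blast
  have "g2 = mmul (minv g1) (mmul g1 g2)" using mmul_minv_left[OF s1] by simp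
  moreover have "minv g1 = mneg g1" using c1(2) by (cases g1) simp
  moreover have "mmul M (1,0,0,1) = M" "mmul M (-1,0,0,-1) = mneg M" "mneg (mneg M) = M" for M
    by (cases M; simp)+
  ultimately have "g2 = mneg g1 \<or> g2 = g1" using p by metis
  then show False using g2(2) by auto
qed

lemma hyp_geo:
  assumes "h \<in> SL2Z" "(mtr h)^2 > 4" "fcomp G h = G" "G \<noteq> (0,0,0)"
  shows "geo G = geo (ofi (Fg h))"
proof -
  have "h \<noteq> (1,0,0,1)" "h \<noteq> (-1,0,0,-1)" using assms(2) by auto
  then obtain m where m: "G = smul m (ofi (Fg h))" using plus_class[OF assms(1,3)] by blast
  then have "m \<noteq> 0" using assms(4) by (cases "Fg h") auto
  then show ?thesis using m geo_smul by simp
qed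

lemma mtr_conj: "g \<in> SL2Z \<Longrightarrow> mtr (mmul (mmul g h) (minv g)) = mtr h"
proof -
  assume "g \<in> SL2Z"
  moreover obtain a b c d where "g = (a,b,c,d)" by (cases g) auto
  moreover obtain e f k l where "h = (e,f,k,l)" by (cases h) auto
  moreover have "(a*e+b*k)*d + (a*f+b*l)*(-c) + ((c*e+d*k)*(-b) + (c*f+d*l)*a) = (a*d-b*c)*(e+l)"
    by algebra
  ultimately show ?thesis by (simp add: SL2Z_def)
qed

lemma pattern_geo:
  assumes "complete_geodesic K" "infinite (stabilizer K)"
  shows "\<exists>G h. K = geo G \<and> fdisc G > 0 \<and> h \<in> SL2Z \<and> (mtr h)^2 > 4 \<and> fcomp G h = G"
proof -
  obtain G p1 p2 where g: "K = geo G" "fdisc G > 0" "p1 \<in> K" "p2 \<in> K" "p1 \<noteq> p2"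
    using complete_geo[OF assms(1)] by blast
  then show ?thesis using exists_hyp[OF g assms(2)] by blast
qed

lemma transport:
  assumes "K = geo G" "fdisc G > 0" "h \<in> SL2Z" "(mtr h)^2 > 4" "fcomp G h = G" "g \<in> SL2Z"
  shows "mob g ` K = geo (ofi (Fg (mmul (mmul g h) (minv g))))
     \<and> fdisc (Fg (mmul (mmul g h) (minv g))) = (mtr h)^2 - 4
     \<and> mmul (mmul g h) (minv g) \<in> SL2Z"
proof -
  define GL where "GL = fcomp G (minv g)"
  define h' where "h' = mmul (mmul g h) (minv g)"
  have gi: "minv g \<in> SL2Z" using minv_SL2Z assms(6) by blast
  have h'S: "h' \<in> SL2Z" unfolding h'_def using mmul_SL2Z assms(3,6) gi by blast
  have e1: "fcomp GL g = G" unfolding GL_def fcomp_mmul[symmetric] minv_mmul[OF assms(6)] fcomp_id ..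
  have img: "mob g ` K = geo GL" using geo_image[OF assms(6), of GL] e1 assms(1) by simp
  have "fcomp GL h' = fcomp (fcomp (fcomp GL g) h) (minv g)" unfolding h'_def fcomp_mmul ..
  also have "\<dots> = GL" unfolding e1 assms(5) by (simp only: GL_def)
  finally have fix': "fcomp GL h' = GL" .
  obtain a b c d where gg: "minv g = (a,b,c,d)" by (cases "minv g") auto
  have "a*d-b*c = 1" using gi gg by (simp add: SL2Z_def)
  then have "fdisc GL = fdisc G" using fdisc_fcomp[of G a b c d] gg GL_def by simp
  then have GL0: "GL \<noteq> (0,0,0)" using assms(2) by auto
  have tr: "mtr h' = mtr h" unfolding h'_def using mtr_conj[OF assms(6)] .
  have "geo GL = geo (ofi (Fg h'))" using hyp_geo[OF h'S _ fix' GL0] tr assms(4) by simp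
  moreover have "fdisc (Fg h') = (mtr h)^2 - 4" using fdisc_Fg[OF h'S] tr by simp
  ultimately show ?thesis using img h'S unfolding h'_def by simp
qed

definition goodQ :: "int \<Rightarrow> (int \<times> int \<times> int) \<Rightarrow> bool" where
  "goodQ D Q \<longleftrightarrow> (\<exists>t. fdisc Q = t^2 - 4 \<and> 4 < t^2 \<and> t^2 \<le> D)"

lemma pattern_classify:
  assumes "modular_pattern \<Gamma>"
  shows "\<exists>D. \<forall>L\<in>\<Gamma>. \<exists>Q. L = geo (ofi Q) \<and> goodQ D Q"
proof -
  note mp = assms[unfolded modular_pattern_def]
  have cg: "\<forall>L\<in>\<Gamma>. complete_geodesic L" by (rule conjunct1[OF mp])
  have ist: "\<forall>L\<in>\<Gamma>. infinite (stabilizer L)" by (rule conjunct2[OF conjunct2[OF conjunct2[OF mp]]])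
  have "\<exists>F. finite F \<and> F \<subseteq> \<Gamma> \<and> (\<forall>L\<in>\<Gamma>. \<exists>g\<in>SL2Z. \<exists>K\<in>F. L = mob g ` K)"
    by (rule conjunct1[OF conjunct2[OF conjunct2[OF mp]]])
  then obtain F where F: "finite F" "F \<subseteq> \<Gamma>" "\<forall>L\<in>\<Gamma>. \<exists>g\<in>SL2Z. \<exists>K\<in>F. L = mob g ` K"
    by blast
  define P where "P K Gh \<longleftrightarrow> K = geo (fst Gh) \<and> fdisc (fst Gh) > 0 \<and> snd Gh \<in> SL2Z \<and> (mtr (snd Gh))^2 > 4 \<and> fcomp (fst Gh) (snd Gh) = fst Gh" for K Gh
  have "\<forall>K\<in>F. \<exists>Gh. P K Gh"
  proof
    fix K assume "K \<in> F"
    then have "K \<in> \<Gamma>" using F(2) by blast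
    then have "complete_geodesic K" "infinite (stabilizer K)" using cg ist by blast+
    then obtain G h where "K = geo G \<and> fdisc G > 0 \<and> h \<in> SL2Z \<and> (mtr h)^2 > 4 \<and> fcomp G h = G"
      using pattern_geo by blast
    then have "P K (G,h)" unfolding P_def by simp
    then show "\<exists>Gh. P K Gh" by blast
  qed
  then obtain Gh where Gh: "\<forall>K\<in>F. P K (Gh K)" using bchoice by blast
  define D where "D = Max (insert 0 ((\<lambda>K. (mtr (snd (Gh K)))^2) ` F))"
  have Dge: "(mtr (snd (Gh K)))^2 \<le> D" if "K \<in> F" for K
    unfolding D_def using F(1) that by (intro Max_ge) auto
  show ?thesis
  proof (rule exI[of _ D], intro ballI)
    fix L assume "L \<in> \<Gamma>"
    then obtain g K where gK: "g \<in> SL2Z" "K \<in> F" "L = mob g ` K" using F(3) by blast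
    have "P K (Gh K)" using Gh gK(2) by blast
    then have hk: "K = geo (fst (Gh K))" "fdisc (fst (Gh K)) > 0" "snd (Gh K) \<in> SL2Z" "(mtr (snd (Gh K)))^2 > 4" "fcomp (fst (Gh K)) (snd (Gh K)) = fst (Gh K)"
      unfolding P_def by simp_all
    note tt = transport[OF hk gK(1)]
    have "goodQ D (Fg (mmul (mmul g (snd (Gh K))) (minv g)))"
      unfolding goodQ_def using tt hk(4) Dge[OF gK(2)] by (intro exI[of _ "mtr (snd (Gh K))"]) simp
    moreover have "L = geo (ofi (Fg (mmul (mmul g (snd (Gh K))) (minv g))))"
      using tt gK(3) by simp
    ultimately show "\<exists>Q. L = geo (ofi Q) \<and> goodQ D Q" by blast
  qed
qed

definition ch :: "complex \<Rightarrow> complex \<Rightarrow> real" where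
  "ch z w = 1 + (cmod (z - w))^2 / (2 * Im z * Im w)"

lemma hdist_ch: "hdist z w = arcosh (ch z w)"
  by (simp add: hdist_def ch_def)

lemma cmod_sq: "(cmod z)^2 = (Re z)^2 + (Im z)^2"
  by (simp add: cmod_def)

lemma ch_ge1: "Im z > 0 \<Longrightarrow> Im w > 0 \<Longrightarrow> ch z w \<ge> 1"
  by (simp add: ch_def)

lemma gram_id:
  fixes T1 X1 Y1 T2 X2 Y2 T3 X3 Y3 :: real
  shows "let a = T1*T2 - X1*X2 - Y1*Y2; b = T2*T3 - X2*X3 - Y2*Y3; c = T1*T3 - X1*X3 - Y1*Y3;
      g1 = T1*T1 - X1*X1 - Y1*Y1; g2 = T2*T2 - X2*X2 - Y2*Y2; g3 = T3*T3 - X3*X3 - Y3*Y3 in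
    g1*g2*g3 + 2*a*b*c - a*a*g3 - b*b*g1 - c*c*g2 =
    (T1*(X2*Y3 - Y2*X3) - X1*(T2*Y3 - Y2*T3) + Y1*(T2*X3 - X2*T3))^2"
  unfolding Let_def by algebra

definition hT :: "complex \<Rightarrow> real" where "hT z = ((Re z)^2 + (Im z)^2 + 1) / (2 * Im z)"
definition hX :: "complex \<Rightarrow> real" where "hX z = ((Re z)^2 + (Im z)^2 - 1) / (2 * Im z)"
definition hY :: "complex \<Rightarrow> real" where "hY z = Re z / Im z"

lemma hyp_norm: "Im z > 0 \<Longrightarrow> hT z * hT z - hX z * hX z - hY z * hY z = 1"
  by (simp add: hT_def hX_def hY_def field_simps power2_eq_square)

lemma hyp_ch: "Im z > 0 \<Longrightarrow> Im w > 0 \<Longrightarrow> hT z * hT w - hX z * hX w - hY z * hY w = ch z w"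
  unfolding ch_def cmod_sq hT_def hX_def hY_def
  by (simp add: field_simps power2_eq_square)

lemma gram_nonneg:
  assumes "Im z > 0" "Im u > 0" "Im w > 0"
  shows "1 + 2 * ch z u * ch u w * ch z w - (ch z u)^2 - (ch u w)^2 - (ch z w)^2 \<ge> 0"
proof -
  have "1*1*1 + 2 * ch z u * ch u w * ch z w - ch z u * ch z u * 1 - ch u w * ch u w * 1 - ch z w * ch z w * 1 \<ge> 0"
    using gram_id[of "hT z" "hT u" "hX z" "hX u" "hY z" "hY u" "hT w" "hX w" "hY w"]
      hyp_norm[OF assms(1)] hyp_norm[OF assms(2)] hyp_norm[OF assms(3)]
      hyp_ch[OF assms(1,2)] hyp_ch[OF assms(2,3)] hyp_ch[OF assms(1,3)]
    unfolding Let_def by simp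
  then show ?thesis by (simp add: power2_eq_square)
qed

lemma tri_real:
  fixes a b c :: real
  assumes "a \<ge> 1" "b \<ge> 1" "c \<ge> 1" "1 + 2*a*b*c - a^2 - b^2 - c^2 \<ge> 0"
  shows "arcosh c \<le> arcosh a + arcosh b"
proof -
  have "(c - a*b)^2 \<le> (a^2 - 1) * (b^2 - 1)" using assms(4) by (simp add: algebra_simps power2_eq_square)
  then have "c - a*b \<le> sqrt ((a^2 - 1) * (b^2 - 1))" by (rule real_le_rsqrt)
  then have c: "c \<le> a*b + sqrt (a^2 - 1) * sqrt (b^2 - 1)" by (simp add: real_sqrt_mult)
  have "cosh (arcosh a + arcosh b) = a*b + sqrt (a^2 - 1) * sqrt (b^2 - 1)"
    using assms(1,2) by (simp add: cosh_add sinh_arcosh_real)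
  then have c2: "c \<le> cosh (arcosh a + arcosh b)" using c by simp
  have nn: "arcosh a + arcosh b \<ge> 0" using assms(1,2) by simp
  show ?thesis
  proof (rule ccontr)
    assume "\<not> ?thesis"
    then have "arcosh (cosh (arcosh a + arcosh b)) < arcosh c" using arcosh_cosh_real[OF nn] by simp
    moreover have "cosh (arcosh a + arcosh b) \<ge> 1" using c2 assms(3) by simp
    ultimately have "cosh (arcosh a + arcosh b) < c" using assms(3) arcosh_less_iff_real by blast
    then show False using c2 by simp
  qed
qed

lemma hdist_tri:
  assumes "Im z > 0" "Im u > 0" "Im w > 0"
  shows "hdist z w \<le> hdist z u + hdist u w"
  unfolding hdist_ch
  by (rule tri_real[OF ch_ge1[OF assms(1,2)] ch_ge1[OF assms(2,3)] ch_ge1[OF assms(1,3)] gram_nonneg[OF assms]])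

lemma hdist_sym: "hdist z w = hdist w z"
  by (simp add: hdist_def norm_minus_commute mult.commute mult.left_commute)

lemma cmod_mob_diff:
  assumes "(a,b,c,d) \<in> SL2Z" "Im z > 0" "Im w > 0"
  shows "mob (a,b,c,d) z - mob (a,b,c,d) w = (z - w) / ((of_int c * z + of_int d) * (of_int c * w + of_int d))"
proof -
  have n1: "of_int c * z + of_int d \<noteq> 0" and n2: "of_int c * w + of_int d \<noteq> 0"
    using denom_ne assms by blast+
  have det: "complex_of_int a * of_int d - of_int b * of_int c = 1"
    using assms(1) by (simp add: SL2Z_def) (metis of_int_1 of_int_diff of_int_mult)
  show ?thesis using n1 n2 det
    by (simp add: divide_simps) algebra
qed

lemma den_cmod: "den (a,b,c,d) z = (cmod (of_int c * z + of_int d))^2"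
  by (simp add: den_def cmod_sq)

lemma ch_mob:
  assumes "M \<in> SL2Z" "Im z > 0" "Im w > 0"
  shows "ch (mob M z) (mob M w) = ch z w"
proof -
  obtain a b c d where M: "M = (a,b,c,d)" by (cases M) auto
  have det: "real_of_int a * of_int d - of_int b * of_int c = 1"
    using assms(1) M by (simp add: SL2Z_def) (metis of_int_1 of_int_diff of_int_mult)
  let ?p = "cmod (of_int c * z + of_int d)" and ?q = "cmod (of_int c * w + of_int d)"
  have p0: "?p \<noteq> 0" "?q \<noteq> 0" using denom_ne assms M by auto
  have iz: "Im (mob M z) = Im z / ?p^2" using mob_Im[of a b c d z] den_ne[OF assms(1,2)] M det den_cmod by simp
  have iw: "Im (mob M w) = Im w / ?q^2" using mob_Im[of a b c d w] den_ne[OF assms(1,3)] M det den_cmod by simp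
  have dz: "cmod (mob M z - mob M w) = cmod (z - w) / (?p * ?q)"
    using cmod_mob_diff[of a b c d z w] assms M by (simp add: norm_divide norm_mult)
  show ?thesis unfolding ch_def iz iw dz using p0 by (simp add: field_simps power2_eq_square)
qed

lemma hdist_mob: "M \<in> SL2Z \<Longrightarrow> Im z > 0 \<Longrightarrow> Im w > 0 \<Longrightarrow> hdist (mob M z) (mob M w) = hdist z w"
  by (simp add: hdist_ch ch_mob)

lemma hseg_mob:
  assumes "M \<in> SL2Z" "z \<in> uhp" "w \<in> uhp" "u \<in> hseg z w"
  shows "mob M u \<in> hseg (mob M z) (mob M w)"
proof -
  have u: "u \<in> uhp" "hdist z u + hdist u w = hdist z w" using assms(4) by (auto simp: hseg_def)
  have i: "Im z > 0" "Im w > 0" "Im u > 0" using assms(2,3) u(1) by (auto simp: uhp_def)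
  show ?thesis using u mob_uhp[OF assms(1) u(1)] hdist_mob[OF assms(1)] i by (simp add: hseg_def)
qed

lemma hseg_vline0:
  assumes "z \<in> uhp" "w \<in> uhp" "u \<in> hseg z w" "Re u = 0"
  shows "\<not> (Re z > 0 \<and> Re w > 0) \<and> \<not> (Re z < 0 \<and> Re w < 0)"
proof -
  have u: "u \<in> uhp" "hdist z u + hdist u w = hdist z w" using assms(3) by (auto simp: hseg_def)
  have i: "Im z > 0" "Im w > 0" "Im u > 0" using assms(1,2) u(1) by (auto simp: uhp_def)
  define z' where "z' = - cnj z"
  have iz': "Im z' > 0" using i by (simp add: z'_def)
  have e1: "hdist z' u = hdist z u" unfolding hdist_ch ch_def cmod_sq z'_def using assms(4)
    by (simp add: power2_eq_square)
  have t: "hdist z' w \<le> hdist z' u + hdist u w" using hdist_tri[OF iz' i(3) i(2)] .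
  show ?thesis
  proof (rule ccontr)
    assume "\<not> ?thesis"
    then have s: "Re z * Re w > 0" by (auto simp: zero_less_mult_iff)
    have "ch z w < ch z' w"
      unfolding ch_def cmod_sq z'_def using s i
      by (simp add: field_simps power2_eq_square)
    then have "hdist z w < hdist z' w" unfolding hdist_ch using ch_ge1[OF i(1,2)] by simp
    then show False using t e1 u(2) by simp
  qed
qed

definition sig :: "complex \<Rightarrow> complex" where "sig z = 1 - cnj z"

lemma sig_Im [simp]: "Im (sig z) = Im z" by (simp add: sig_def)
lemma sig_Re [simp]: "Re (sig z) = 1 - Re z" by (simp add: sig_def)
lemma sig_sig [simp]: "sig (sig z) = z" by (simp add: sig_def)

fun conjR :: "imat \<Rightarrow> imat" where
  "conjR (a,b,c,d) = (a-c, c+d-a-b, -c, c+d)"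

lemma conjR_SL2Z: "R \<in> SL2Z \<Longrightarrow> conjR R \<in> SL2Z"
  by (cases R) (simp add: SL2Z_def algebra_simps)

lemma cnj_mob: "cnj (mob (a,b,c,d) w) = mob (a,b,c,d) (cnj w)"
  by simp

lemma sig_conj:
  assumes "R \<in> SL2Z" "Im z > 0"
  shows "sig (mob R (sig z)) = mob (conjR R) z"
proof -
  obtain a b c d where R: "R = (a,b,c,d)" by (cases R) auto
  have n: "of_int (-c) * z + of_int (c+d) \<noteq> 0"
    using denom_ne[of "a-c" "c+d-a-b" "-c" "c+d" z] conjR_SL2Z[OF assms(1)] R assms(2) by simp
  have n': "of_int c * (1 - z) + of_int d \<noteq> 0" using n by (simp add: algebra_simps)
  have "sig (mob R (sig z)) = 1 - mob R (1 - z)"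
    by (simp add: sig_def R)
  also have "\<dots> = mob (conjR R) z"
    using n n' by (simp add: R divide_simps) (simp add: algebra_simps)
  finally show ?thesis .
qed

lemma refl_basic:
  assumes "r \<in> T0_reflections"
  shows "\<exists>R\<in>SL2Z. \<forall>z. Im z > 0 \<longrightarrow> r z = mob R (sig z)"
proof -
  have "reflV 0 z = mob (1,-1,0,1) (sig z)" for z by (simp add: reflV_def sig_def)
  moreover have "reflV 1 z = mob (1,1,0,1) (sig z)" for z by (simp add: reflV_def sig_def)
  moreover have "reflC (1/2) (1/2) z = mob (-1,1,-2,1) (sig z)" if "Im z > 0" for z
  proof -
    have n1: "cnj z - 1/2 \<noteq> 0"
    proof
      assume h: "cnj z - 1/2 = 0"
      have "Im (cnj z - 1/2) = Im 0" by (simp only: h)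
      then show False using that by simp
    qed
    have n2: "-2 * (1 - cnj z) + 1 \<noteq> 0" using n1 by (auto simp: algebra_simps)
    show ?thesis using n1 n2 by (simp add: reflC_def sig_def divide_simps power2_eq_square)
  qed
  moreover have "(1,-1,0,1) \<in> SL2Z" "(1,1,0,1) \<in> SL2Z" "(-1,1,-2,1) \<in> SL2Z" by (simp_all add: SL2Z_def)
  ultimately show ?thesis using assms unfolding T0_reflections_def by blast
qed

lemma refl_rep:
  assumes "f \<in> refl_group"
  shows "\<exists>M b. M \<in> SL2Z \<and> (\<forall>z. Im z > 0 \<longrightarrow> f z = mob M (if b then z else sig z))"
  using assms
proof (induction rule: refl_group.induct)
  case id_in
  show ?case by (rule exI[of _ "(1,0,0,1)"], rule exI[of _ True]) (simp add: SL2Z_def)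
next
  case (step f r)
  obtain M b where Mb: "M \<in> SL2Z" "\<forall>z. Im z > 0 \<longrightarrow> f z = mob M (if b then z else sig z)" using step.IH by blast
  obtain R where R: "R \<in> SL2Z" "\<forall>z. Im z > 0 \<longrightarrow> r z = mob R (sig z)" using refl_basic[OF step.hyps(2)] by blast
  have rz: "Im (r z) > 0" if "Im z > 0" for z using R mob_Im_pos[OF R(1), of "sig z"] that by simp
  show ?case
  proof (cases b)
    case True
    have "(f \<circ> r) z = mob (mmul M R) (sig z)" if "Im z > 0" for z
      using Mb(2) rz[OF that] R(2) that True mob_mmul[OF Mb(1) R(1), of "sig z"] by simp
    then show ?thesis using mmul_SL2Z[OF Mb(1) R(1)] by (intro exI[of _ "mmul M R"] exI[of _ False]) simp
  next
    case False
    have "(f \<circ> r) z = mob (mmul M (conjR R)) z" if "Im z > 0" for z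
      using Mb(2) rz[OF that] R(2) that False sig_conj[OF R(1) that] mob_mmul[OF Mb(1) conjR_SL2Z[OF R(1)] that] by simp
    then show ?thesis using mmul_SL2Z[OF Mb(1) conjR_SL2Z[OF R(1)]] by (intro exI[of _ "mmul M (conjR R)"] exI[of _ True]) simp
  qed
qed

lemma T0_uhp: "T0 \<subseteq> uhp" by (auto simp: T0_def)

lemma sig_T0: "z \<in> T0 \<Longrightarrow> sig z \<in> T0"
proof -
  assume z: "z \<in> T0"
  have "sig z - complex_of_real (1/2) = - cnj (z - complex_of_real (1/2))" by (simp add: sig_def complex_eq_iff)
  then have "cmod (sig z - complex_of_real (1/2)) = cmod (z - complex_of_real (1/2))" by (simp only: norm_minus_cancel complex_mod_cnj)
  then show ?thesis using z by (simp add: T0_def uhp_def)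
qed

lemma center_uhp: "Im T0_center > 0" by (simp add: T0_center_def)

lemma sig_center: "sig T0_center = T0_center"
  by (simp add: sig_def T0_center_def complex_eq_iff)

lemma tile_rep:
  assumes "f \<in> refl_group"
  shows "\<exists>M\<in>SL2Z. f T0_center = mob M T0_center \<and> (\<forall>w\<in>f ` T0. \<exists>t\<in>T0. w = mob M t)"
proof -
  obtain M b where Mb: "M \<in> SL2Z" "\<forall>z. Im z > 0 \<longrightarrow> f z = mob M (if b then z else sig z)"
    using refl_rep[OF assms] by blast
  have c: "f T0_center = mob M T0_center" using Mb(2) center_uhp sig_center by simp
  have "\<exists>t\<in>T0. w = mob M t" if "w \<in> f ` T0" for w
  proof -
    obtain z where z: "z \<in> T0" "w = f z" using \<open>w \<in> f ` T0\<close> by blast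
    have "Im z > 0" using z(1) T0_uhp by (auto simp: uhp_def)
    then have "w = mob M (if b then z else sig z)" using Mb(2) z by simp
    moreover have "(if b then z else sig z) \<in> T0" using z(1) sig_T0 by simp
    ultimately show ?thesis by blast
  qed
  then show ?thesis using Mb(1) c by blast
qed

lemma sig_swap:
  assumes "\<And>z. z \<in> A \<Longrightarrow> sig z \<in> B" "\<And>z. z \<in> B \<Longrightarrow> sig z \<in> A"
  shows "sig ` A = B"
proof
  show "sig ` A \<subseteq> B" using assms(1) by blast
  show "B \<subseteq> sig ` A"
  proof
    fix z assume "z \<in> B"
    then have "sig z \<in> A" using assms(2) by blast
    then show "z \<in> sig ` A" by (metis image_eqI sig_sig)
  qed
qed

lemma sig_v0: "sig ` vline 0 = vline 1"
  by (rule sig_swap) (auto simp: vline_def uhp_def)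
lemma sig_v1: "sig ` vline 1 = vline 0"
  by (rule sig_swap) (auto simp: vline_def uhp_def)
lemma sig_hc: "sig ` hcirc (1/2) (1/2) = hcirc (1/2) (1/2)"
proof (rule sig_swap)
  have e: "cmod (sig z - complex_of_real (1/2)) = cmod (z - complex_of_real (1/2))" for z
  proof -
    have "sig z - complex_of_real (1/2) = - cnj (z - complex_of_real (1/2))" by (simp add: sig_def complex_eq_iff)
    then show ?thesis by (simp only: norm_minus_cancel complex_mod_cnj)
  qed
  show "sig z \<in> hcirc (1/2) (1/2)" if "z \<in> hcirc (1/2) (1/2)" for z using that e by (simp add: hcirc_def uhp_def)
  show "sig z \<in> hcirc (1/2) (1/2)" if "z \<in> hcirc (1/2) (1/2)" for z using that e by (simp add: hcirc_def uhp_def)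
qed

lemma vline0_geo: "vline 0 = geo (0,1,0)" using vline_geo[of 0] by simp

lemma mob_image_mmul:
  assumes "M \<in> SL2Z" "N \<in> SL2Z" "A \<subseteq> uhp"
  shows "mob M ` (mob N ` A) = mob (mmul M N) ` A"
proof -
  have "mob M (mob N z) = mob (mmul M N) z" if "z \<in> A" for z
    using mob_mmul[OF assms(1,2)] that assms(3) by (auto simp: uhp_def)
  then show ?thesis by (simp add: image_image cong: image_cong)
qed

lemma side_rep:
  assumes "S \<in> T0_sides"
  shows "\<exists>N\<in>SL2Z. S = mob N ` vline 0"
proof -
  have v0: "vline 0 = mob (1,0,0,1) ` vline 0" by simp
  have "mob (1,1,0,1) ` geo (fcomp (0,1,-1) (1,1,0,1)) = geo (0,1,-1)" by (rule geo_image) (simp add: SL2Z_def)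
  then have v1: "vline 1 = mob (1,1,0,1) ` vline 0" using vline_geo[of 1] vline0_geo by simp
  have "mob (1,0,1,1) ` geo (fcomp (1,-1,0) (1,0,1,1)) = geo (1,-1,0)" by (rule geo_image) (simp add: SL2Z_def)
  moreover have "geo (fcomp (1,-1,0) (1,0,1,1)) = vline 0"
  proof -
    have "fcomp (1,-1,0) (1,0,1,1) = smul (-1) (0,1,0)" by simp
    then show ?thesis using geo_smul[of "-1" "(0,1,0)"] vline0_geo by simp
  qed
  moreover have "hcirc (1/2) (1/2) = geo (1,-1,0)" using hcirc_geo[of "1/2" "1/2"] by (simp add: power2_eq_square)
  ultimately have hc: "hcirc (1/2) (1/2) = mob (1,0,1,1) ` vline 0" by simp
  have "(1,0,0,1) \<in> SL2Z" "(1,1,0,1) \<in> SL2Z" "(1,0,1,1) \<in> SL2Z" by (simp_all add: SL2Z_def)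
  then show ?thesis using assms v0 v1 hc unfolding T0_sides_def by blast
qed

lemma sides_uhp: "S \<in> T0_sides \<Longrightarrow> S \<subseteq> uhp"
  by (auto simp: T0_sides_def vline_def hcirc_def)

lemma edge_rep:
  assumes "E \<in> tiling_edges"
  shows "\<exists>M\<in>SL2Z. E = mob M ` vline 0"
proof -
  obtain f S where fS: "E = f ` S" "f \<in> refl_group" "S \<in> T0_sides" using assms unfolding tiling_edges_def by blast
  obtain M b where Mb: "M \<in> SL2Z" "\<forall>z. Im z > 0 \<longrightarrow> f z = mob M (if b then z else sig z)"
    using refl_rep[OF fS(2)] by blast
  define S' where "S' = (if b then S else sig ` S)"
  have S': "S' \<in> T0_sides" using fS(3) sig_v0 sig_v1 sig_hc unfolding S'_def T0_sides_def by auto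
  have "f ` S = mob M ` S'"
  proof -
    have "f z = mob M (if b then z else sig z)" if "z \<in> S" for z
      using Mb(2) that sides_uhp[OF fS(3)] by (auto simp: uhp_def)
    then have "f ` S = (\<lambda>z. mob M (if b then z else sig z)) ` S" by (simp cong: image_cong)
    then show ?thesis unfolding S'_def by (cases b) (simp_all add: image_image)
  qed
  moreover obtain N where N: "N \<in> SL2Z" "S' = mob N ` vline 0" using side_rep[OF S'] by blast
  moreover have "vline 0 \<subseteq> uhp" by (auto simp: vline_def)
  ultimately have "E = mob (mmul M N) ` vline 0" using fS(1) mob_image_mmul[OF Mb(1) N(1)] by simp
  then show ?thesis using mmul_SL2Z[OF Mb(1) N(1)] by blast
qed

lemma kk1: "(k::int) * (k+1) \<ge> 0"
  by (cases "k \<ge> 0") (auto simp: mult_nonneg_nonneg mult_nonpos_nonpos)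

lemma kk2: "(x::int) = k * (k+1) \<Longrightarrow> x \<ge> 0" using kk1 by simp

lemma prod_pairs:
  fixes a b c d :: int
  assumes "a*d - b*c = 1"
  shows "(a*c)*(b*d) \<ge> 0" "(a*c)*((a+b)*(c+d)) \<ge> 0" "(b*d)*((a+b)*(c+d)) \<ge> 0"
proof -
  have e1: "a*d = b*c + 1" using assms by linarith
  have "(a*c)*(b*d) = (b*c)*(a*d)" by (simp add: ac_simps)
  then show "(a*c)*(b*d) \<ge> 0" unfolding e1 by (rule kk2)
  have e2: "a*(c+d) = c*(a+b) + 1" using assms by (simp add: algebra_simps)
  have "(a*c)*((a+b)*(c+d)) = (c*(a+b)) * (a*(c+d))" by (simp add: ac_simps)
  then show "(a*c)*((a+b)*(c+d)) \<ge> 0" unfolding e2 by (rule kk2)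
  have e3: "(a+b)*d = b*(c+d) + 1" using assms by (simp add: algebra_simps)
  have "(b*d)*((a+b)*(c+d)) = (b*(c+d)) * ((a+b)*d)" by (simp add: ac_simps)
  then show "(b*d)*((a+b)*(c+d)) \<ge> 0" unfolding e3 by (rule kk2)
qed

lemma not_all_zero:
  fixes a b c d :: int
  assumes "a*d - b*c = 1"
  shows "a*c + b*d + (a+b)*(c+d) \<noteq> 0"
proof
  assume h: "a*c + b*d + (a+b)*(c+d) = 0"
  define p where "p = a*c" define q where "q = b*d" define r where "r = (a+b)*(c+d)"
  have pq: "p*q \<ge> 0" "p*r \<ge> 0" "q*r \<ge> 0" using prod_pairs[OF assms] unfolding p_def q_def r_def by auto
  have h': "p + q + r = 0" using h unfolding p_def q_def r_def by simp
  have "(p+q+r)^2 = p^2 + q^2 + r^2 + 2*(p*q + p*r + q*r)" by (simp add: power2_eq_square algebra_simps)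
  then have s: "p^2 + q^2 + r^2 + 2*(p*q + p*r + q*r) = 0" using h' by simp
  have aux: "x = 0 \<and> y = 0" if "(x::int) \<ge> 0" "y \<ge> 0" "z \<ge> 0" "u \<ge> 0" "v \<ge> 0" "w \<ge> 0" "x + y + z + 2*(u+v+w) = 0" for x y z u v w
    using that by arith
  have "p^2 = 0 \<and> q^2 = 0" by (rule aux[OF zero_le_power2 zero_le_power2 zero_le_power2 pq s])
  then have "p^2 = 0" "q^2 = 0" by auto
  then have p0: "p = 0" and q0: "q = 0" using \<open>p^2 = 0\<close> by simp_all
  then have r0: "r = 0" using h' by simp
  show False
  proof (cases "a = 0")
    case True
    then have "b*c = -1" using assms by simp
    then have "b \<noteq> 0" "c \<noteq> 0" by auto
    then have "d = 0" using q0 q_def by simp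
    then have "r = b*c" using True r_def by simp
    then show False using r0 \<open>b*c = -1\<close> by simp
  next
    case False
    then have "c = 0" using p0 p_def by simp
    then have "a*d = 1" using assms by simp
    then have "d \<noteq> 0" by auto
    then have "b = 0" using q0 q_def by simp
    then have "r = a*d" using \<open>c = 0\<close> r_def by simp
    then show False using r0 \<open>a*d = 1\<close> by simp
  qed
qed

lemma sign_lemma:
  assumes "M \<in> SL2Z" "t \<in> T0"
  shows "Re (mob M t) * Re (mob M T0_center) \<ge> 0 \<and> Re (mob M T0_center) \<noteq> 0"
proof -
  obtain a b c d where M: "M = (a,b,c,d)" by (cases M) auto
  have det: "a*d - b*c = 1" using assms(1) M by (simp add: SL2Z_def)
  have ti: "Im t > 0" using assms(2) by (simp add: T0_def uhp_def)
  have ci: "Im T0_center > 0" by (rule center_uhp)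
  have dt: "den M t > 0" "den M T0_center > 0" using den_pos assms(1) M ti ci by blast+
  define p where "p = real_of_int (a*c)"
  define q where "q = real_of_int (b*d)"
  define r where "r = real_of_int ((a+b)*(c+d))"
  have pq: "p*q \<ge> 0" "p*r \<ge> 0" "q*r \<ge> 0" using prod_pairs[OF det] unfolding p_def q_def r_def
    by (metis of_int_0_le_iff of_int_mult)+
  have nz: "p + q + r \<noteq> 0" using not_all_zero[OF det] unfolding p_def q_def r_def
    by (metis of_int_add of_int_eq_0_iff)
  have nf: "Re (mob M z) * den M z = p * ((Re z)^2 + (Im z)^2 - Re z) + q * (1 - Re z) + r * Re z" if "Im z > 0" for z
  proof -
    have dn: "den (a,b,c,d) z \<noteq> 0" using den_ne assms(1) that M by blast
    have "Re (mob M z) * den M z = of_int a * of_int c * ((Re z)^2 + (Im z)^2) + (of_int a * of_int d + of_int b * of_int c) * Re z + of_int b * of_int d"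
      unfolding M using mob_Re[OF dn] dn by simp
    also have "\<dots> = p * ((Re z)^2 + (Im z)^2 - Re z) + q * (1 - Re z) + r * Re z"
      unfolding p_def q_def r_def by (simp add: algebra_simps)
    finally show ?thesis .
  qed
  have s: "Re t \<ge> 0" "1 - Re t \<ge> 0" "(Re t)^2 + (Im t)^2 - Re t \<ge> 0"
  proof -
    show "Re t \<ge> 0" "1 - Re t \<ge> 0" using assms(2) by (auto simp: T0_def)
    have "cmod (t - complex_of_real (1/2)) \<ge> 1/2" using assms(2) by (simp add: T0_def)
    then have "(cmod (t - complex_of_real (1/2)))^2 \<ge> (1/2)^2" by (simp add: power_mono)
    then have "(Re t - 1/2)^2 + (Im t)^2 \<ge> 1/4" by (simp add: cmod_def power2_eq_square)
    then show "(Re t)^2 + (Im t)^2 - Re t \<ge> 0" by (simp add: power2_eq_square algebra_simps)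
  qed
  have c0: "(Re T0_center)^2 + (Im T0_center)^2 = 1" "Re T0_center = 1/2"
    by (simp_all add: T0_center_def power2_eq_square)
  have nc: "Re (mob M T0_center) * den M T0_center = (p + q + r) / 2"
    using nf[OF ci, unfolded c0(1), unfolded c0(2)] by simp
  have ntc: "(Re (mob M t) * den M t) * (Re (mob M T0_center) * den M T0_center) \<ge> 0"
  proof -
    define s1 where "s1 = Re t" define s2 where "s2 = 1 - Re t" define s3 where "s3 = (Re t)^2 + (Im t)^2 - Re t"
    have ss: "s1 \<ge> 0" "s2 \<ge> 0" "s3 \<ge> 0" using s unfolding s1_def s2_def s3_def by auto
    have "(p*s3 + q*s2 + r*s1) * (p+q+r) = p*p*s3 + q*q*s2 + r*r*s1 + (p*q)*(s3+s2) + (p*r)*(s3+s1) + (q*r)*(s2+s1)"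
      by (simp add: algebra_simps)
    also have "\<dots> \<ge> 0"
    proof -
      have "p*p*s3 \<ge> 0" by (rule mult_nonneg_nonneg[OF zero_le_square ss(3)])
      moreover have "q*q*s2 \<ge> 0" by (rule mult_nonneg_nonneg[OF zero_le_square ss(2)])
      moreover have "r*r*s1 \<ge> 0" by (rule mult_nonneg_nonneg[OF zero_le_square ss(1)])
      moreover have "(p*q)*(s3+s2) \<ge> 0" using ss by (intro mult_nonneg_nonneg[OF pq(1)]) simp
      moreover have "(p*r)*(s3+s1) \<ge> 0" using ss by (intro mult_nonneg_nonneg[OF pq(2)]) simp
      moreover have "(q*r)*(s2+s1) \<ge> 0" using ss by (intro mult_nonneg_nonneg[OF pq(3)]) simp
      ultimately show ?thesis by linarith
    qed
    finally have "(p*s3 + q*s2 + r*s1) * (p+q+r) \<ge> 0" .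
    then show ?thesis unfolding nc nf[OF ti] s1_def s2_def s3_def by simp
  qed
  have "Re (mob M t) * Re (mob M T0_center) * (den M t * den M T0_center) \<ge> 0"
    using ntc by (simp add: algebra_simps)
  moreover have dd: "den M t * den M T0_center > 0" using dt by simp
  ultimately have "Re (mob M t) * Re (mob M T0_center) * (den M t * den M T0_center) / (den M t * den M T0_center) \<ge> 0"
    by (intro divide_nonneg_pos) auto
  moreover have "Re (mob M t) * Re (mob M T0_center) * (den M t * den M T0_center) / (den M t * den M T0_center) = Re (mob M t) * Re (mob M T0_center)"
    using dt by (intro nonzero_mult_div_cancel_right) simp
  ultimately have g: "Re (mob M t) * Re (mob M T0_center) \<ge> 0" by simp
  have "Re (mob M T0_center) \<noteq> 0" using nc nz by auto
  then show ?thesis using g by simp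
qed

lemma two_sides:
  fixes A B C :: real
  assumes "Qval (A,B,C) z1 = 0" "Qval (A,B,C) z2 = 0" "Im z1 > 0" "Im z2 > 0" "Re z1 \<le> 0" "Re z2 \<ge> 0"
  shows "A * C \<le> 0"
proof -
  have main: "C \<le> 0" if "A' > 0" "Qval (A',B',C) z1 = 0" "Qval (A',B',C) z2 = 0" for A' B' C
  proof -
    define x1 where "x1 = Re z1" define x2 where "x2 = Re z2" define y1 where "y1 = Im z1" define y2 where "y2 = Im z2"
    have e1: "A'*x1^2 + B'*x1 + C = -A'*y1^2" and e2: "A'*x2^2 + B'*x2 + C = -A'*y2^2"
      using that(2,3) unfolding x1_def x2_def y1_def y2_def by (simp_all add: algebra_simps)
    have y: "y1 > 0" "y2 > 0" using assms(3,4) unfolding y1_def y2_def by auto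
    have x: "x1 \<le> 0" "x2 \<ge> 0" using assms(5,6) unfolding x1_def x2_def by auto
    have i1: "x2*(A'*x1^2 + B'*x1 + C) - x1*(A'*x2^2 + B'*x2 + C) = x2 * (-A'*y1^2) - x1 * (-A'*y2^2)"
      by (simp only: e1 e2)
    have i2: "x2*(A'*x1^2 + B'*x1 + C) - x1*(A'*x2^2 + B'*x2 + C) = A'*x1*x2*(x1 - x2) + (x2 - x1) * C"
      by algebra
    have id: "(x2 - x1) * C = x2 * (-A'*y1^2) - x1 * (-A'*y2^2) - A'*x1*x2*(x1 - x2)"
      using i1 i2 by linarith
    have t1: "x2 * (-A'*y1^2) \<le> 0" using x that(1) by (simp add: mult_nonneg_nonpos)
    have "A'*y2^2 \<ge> 0" using that(1) by simp
    then have "x1 * (A'*y2^2) \<le> 0" using x by (simp add: mult_nonpos_nonneg)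
    then have t2: "- x1 * (-A'*y2^2) \<le> 0" by simp
    have t3: "A'*x1*x2*(x1 - x2) \<ge> 0"
    proof -
      have "x1*x2 \<le> 0" using x by (simp add: mult_nonpos_nonneg)
      then have "x1*x2*(x1-x2) \<ge> 0" using x by (simp add: mult_nonpos_nonpos)
      then show ?thesis using that(1) by (simp add: mult.assoc)
    qed
    have le: "(x2 - x1) * C \<le> 0" using id t1 t2 t3 by linarith
    show ?thesis
    proof (cases "x2 - x1 > 0")
      case True then show ?thesis using le by (simp add: mult_le_0_iff)
    next
      case False
      then have "x1 = 0" "x2 = 0" using x by auto
      then have "C = -A'*y1^2" using e1 by simp
      then show ?thesis using that(1) by simp
    qed
  qed
  show ?thesis
  proof (cases "A > 0")
    case True
    then show ?thesis using main[OF True assms(1,2)] by (simp add: mult_le_0_iff)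
  next
    case False
    show ?thesis
    proof (cases "A = 0")
      case True then show ?thesis by simp
    next
      case False
      then have "-A > 0" using \<open>\<not> A > 0\<close> by simp
      moreover have "Qval (-A,-B,-C) z1 = 0" "Qval (-A,-B,-C) z2 = 0" using assms(1,2) by (simp_all add: algebra_simps)
      ultimately have "-C \<le> 0" using main by blast
      then show ?thesis using \<open>-A > 0\<close> by (simp add: mult_le_0_iff)
    qed
  qed
qed

lemma nonsquare:
  fixes s t :: int
  assumes "t^2 > 4"
  shows "s^2 \<noteq> t^2 - 4"
proof
  assume h: "s^2 = t^2 - 4"
  define T where "T = \<bar>t\<bar>" define S where "S = \<bar>s\<bar>"
  have T2: "T^2 = t^2" "S^2 = s^2" unfolding T_def S_def by simp_all
  have T0: "T \<ge> 0" and S0: "S \<ge> 0" unfolding T_def S_def by simp_all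
  have "T > 2"
  proof (rule ccontr)
    assume "\<not> T > 2"
    then have "T \<le> 2" by simp
    then have "T^2 \<le> 2^2" using T0 by (rule power_mono)
    then show False using assms T2 by simp
  qed
  have "S < T"
  proof (rule ccontr)
    assume "\<not> S < T"
    then have "T \<le> S" by simp
    then have "T^2 \<le> S^2" using T0 by (rule power_mono)
    then show False using h T2 by simp
  qed
  then have "S \<le> T - 1" by simp
  then have "S^2 \<le> (T-1)^2" using S0 by (rule power_mono)
  then show False using h T2 \<open>T > 2\<close> by (simp add: power2_eq_square algebra_simps)
qed

lemma mmul_assoc: "mmul (mmul A B) C = mmul A (mmul B C)"
  by (cases A; cases B; cases C) (simp add: algebra_simps)

lemma mob_mneg: "mob (mneg M) z = mob M z"
proof -
  obtain a b c d where "M = (a,b,c,d)" by (cases M) auto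
  moreover have "(- (complex_of_int a * z) - of_int b) / (- (of_int c * z) - of_int d) = (of_int a * z + of_int b) / (of_int c * z + of_int d)"
    by (metis minus_diff_eq diff_minus_eq_add minus_divide_divide uminus_add_conv_diff add.commute)
  ultimately show ?thesis by simp
qed

lemma fdisc_inv: "M \<in> SL2Z \<Longrightarrow> fdisc (fcomp Q M) = fdisc Q"
  by (cases M) (simp add: fdisc_fcomp SL2Z_def)

definition box :: "int \<Rightarrow> (int \<times> int \<times> int) set" where
  "box D = {-D..D} \<times> {-D..D} \<times> {-D..D}"

lemma bound_lemma:
  assumes "goodQ D Q" "M \<in> SL2Z" "fcomp Q M = (A,B,C)" "A * C \<le> 0"
  shows "(A,B,C) \<in> box D"
proof -
  obtain t where t: "fdisc Q = t^2 - 4" "4 < t^2" "t^2 \<le> D" using assms(1) unfolding goodQ_def by blast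
  have disc: "B^2 - 4*A*C = t^2 - 4" using fdisc_inv[OF assms(2), of Q] assms(3) t(1) by simp
  have A0: "A \<noteq> 0"
  proof
    assume "A = 0" then have "B^2 = t^2 - 4" using disc by simp
    then show False using nonsquare[OF t(2)] by blast
  qed
  have C0: "C \<noteq> 0"
  proof
    assume "C = 0" then have "B^2 = t^2 - 4" using disc by simp
    then show False using nonsquare[OF t(2)] by blast
  qed
  have B2: "B^2 \<le> D" using disc assms(4) t(3) by linarith
  have "\<bar>B\<bar> \<le> B^2"
  proof (cases "B = 0")
    case False
    then have "\<bar>B\<bar> \<ge> 1" by linarith
    then have "\<bar>B\<bar> * 1 \<le> \<bar>B\<bar> * \<bar>B\<bar>" by (intro mult_left_mono) auto
    then show ?thesis by (simp add: power2_eq_square abs_mult[symmetric])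
  qed simp
  then have Bb: "\<bar>B\<bar> \<le> D" using B2 by linarith
  have "-(A*C) \<le> D" using disc assms(4) t(2) t(3) zero_le_power2[of B] by linarith
  moreover have "\<bar>A*C\<bar> = -(A*C)" using assms(4) by simp
  ultimately have AC: "\<bar>A*C\<bar> \<le> D" by simp
  have "\<bar>A\<bar> \<le> \<bar>A*C\<bar>"
  proof -
    have "\<bar>C\<bar> \<ge> 1" using C0 by linarith
    then have "\<bar>A\<bar> * 1 \<le> \<bar>A\<bar> * \<bar>C\<bar>" by (intro mult_left_mono) auto
    then show ?thesis by (simp add: abs_mult)
  qed
  moreover have "\<bar>C\<bar> \<le> \<bar>A*C\<bar>"
  proof -
    have "\<bar>A\<bar> \<ge> 1" using A0 by linarith
    then have "1 * \<bar>C\<bar> \<le> \<bar>A\<bar> * \<bar>C\<bar>" by (intro mult_right_mono) auto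
    then show ?thesis by (simp add: abs_mult)
  qed
  ultimately have "\<bar>A\<bar> \<le> D" "\<bar>C\<bar> \<le> D" using AC by linarith+
  then show ?thesis using Bb unfolding box_def by auto
qed

lemma edge_cross:
  assumes gQ: "goodQ D Q" and L: "L = geo (ofi Q)"
    and M1: "M1 \<in> SL2Z" and M2: "M2 \<in> SL2Z"
    and w1: "w1 \<in> L" "w1 = mob M1 t1" "t1 \<in> T0"
    and w2: "w2 \<in> L" "w2 = mob M2 t2" "t2 \<in> T0"
    and M: "M \<in> SL2Z" and v: "v \<in> vline 0" "mob M v \<in> hseg (mob M1 T0_center) (mob M2 T0_center)"
  shows "fcomp Q M \<in> box D"
proof -
  define N where "N = minv M"
  have N: "N \<in> SL2Z" unfolding N_def using minv_SL2Z[OF M] .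
  define P1 where "P1 = mmul N M1"
  define P2 where "P2 = mmul N M2"
  have P: "P1 \<in> SL2Z" "P2 \<in> SL2Z" unfolding P1_def P2_def using mmul_SL2Z N M1 M2 by blast+
  have ci: "Im T0_center > 0" by (rule center_uhp)
  have vi: "Im v > 0" using v(1) by (simp add: vline_def uhp_def)
  have ti: "Im t1 > 0" "Im t2 > 0" using w1(3) w2(3) by (auto simp: T0_def uhp_def)
  have NM: "mob N (mob M z) = z" if "Im z > 0" for z unfolding N_def using mob_minv2[OF M that] .
  have MN: "mob M (mob N z) = z" if "Im z > 0" for z unfolding N_def using mob_minv1[OF M that] .
  have c1u: "mob M1 T0_center \<in> uhp" "mob M2 T0_center \<in> uhp" using mob_uhp M1 M2 ci by (auto simp: uhp_def)
  have "mob N (mob M v) \<in> hseg (mob N (mob M1 T0_center)) (mob N (mob M2 T0_center))"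
    using hseg_mob[OF N c1u v(2)] .
  then have vh: "v \<in> hseg (mob P1 T0_center) (mob P2 T0_center)"
    unfolding NM[OF vi] P1_def P2_def using mob_mmul[OF N M1 ci] mob_mmul[OF N M2 ci] by simp
  have cp: "mob P1 T0_center \<in> uhp" "mob P2 T0_center \<in> uhp" using mob_uhp P ci by (auto simp: uhp_def)
  have rv: "Re v = 0" using v(1) by (simp add: vline_def)
  have nsame: "\<not> (Re (mob P1 T0_center) > 0 \<and> Re (mob P2 T0_center) > 0) \<and> \<not> (Re (mob P1 T0_center) < 0 \<and> Re (mob P2 T0_center) < 0)"
    using hseg_vline0[OF cp vh rv] .
  have s1: "Re (mob P1 t1) * Re (mob P1 T0_center) \<ge> 0" "Re (mob P1 T0_center) \<noteq> 0" using sign_lemma[OF P(1) w1(3)] by auto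
  have s2: "Re (mob P2 t2) * Re (mob P2 T0_center) \<ge> 0" "Re (mob P2 T0_center) \<noteq> 0" using sign_lemma[OF P(2) w2(3)] by auto
  define z1 where "z1 = mob P1 t1"
  define z2 where "z2 = mob P2 t2"
  have z1e: "z1 = mob N w1" unfolding z1_def P1_def w1(2) using mob_mmul[OF N M1 ti(1)] by simp
  have z2e: "z2 = mob N w2" unfolding z2_def P2_def w2(2) using mob_mmul[OF N M2 ti(2)] by simp
  have wi: "Im w1 > 0" "Im w2 > 0" using w1(1) w2(1) L by (auto simp: geo_def uhp_def)
  have zi: "Im z1 > 0" "Im z2 > 0" unfolding z1e z2e using mob_Im_pos[OF N] wi by auto
  obtain A B C where ABC: "fcomp Q M = (A,B,C)" by (cases "fcomp Q M") auto
  have onz: "Qval (ofi (A,B,C)) z = 0" if "z = mob N w" "w \<in> L" for z w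
  proof -
    have wi': "Im w > 0" using that(2) L by (auto simp: geo_def uhp_def)
    have zi': "Im z > 0" using that(1) mob_Im_pos[OF N wi'] by simp
    have "Qval (ofi Q) (mob M z) * den M z = Qval (fcomp (ofi Q) M) z" using Qval_mob[OF M zi'] .
    moreover have "mob M z = w" using that(1) MN[OF wi'] by simp
    moreover have "Qval (ofi Q) w = 0" using that(2) L by (simp add: geo_def)
    ultimately have "Qval (fcomp (ofi Q) M) z = 0" by simp
    moreover have "fcomp (ofi Q) M = ofi (A,B,C)" by (simp add: fcomp_ofi ABC)
    ultimately show ?thesis by simp
  qed
  have q1: "Qval (ofi (A,B,C)) z1 = 0" using onz[OF z1e w1(1)] .
  have q2: "Qval (ofi (A,B,C)) z2 = 0" using onz[OF z2e w2(1)] .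
  have "real_of_int A * real_of_int C \<le> 0"
  proof (cases "Re (mob P1 T0_center) > 0")
    case True
    then have "Re (mob P2 T0_center) < 0" using nsame s2(2) by linarith
    then have "Re z2 \<le> 0" "Re z1 \<ge> 0" using s1(1) s2(1) True unfolding z1_def z2_def
      by (auto simp: zero_le_mult_iff)
    then show ?thesis using two_sides[of "of_int A" "of_int B" "of_int C" z2 z1] q1 q2 zi by simp
  next
    case False
    then have n1: "Re (mob P1 T0_center) < 0" using s1(2) by linarith
    then have "Re (mob P2 T0_center) > 0" using nsame s2(2) by linarith
    then have "Re z1 \<le> 0" "Re z2 \<ge> 0" using s1(1) s2(1) n1 unfolding z1_def z2_def
      by (auto simp: zero_le_mult_iff)
    then show ?thesis using two_sides[of "of_int A" "of_int B" "of_int C" z1 z2] q1 q2 zi by simp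
  qed
  then have "A * C \<le> 0" by (metis of_int_le_0_iff of_int_mult)
  then show ?thesis using bound_lemma[OF gQ M ABC] ABC by simp
qed

lemma goodQ_nz: "goodQ D Q \<Longrightarrow> ofi Q \<noteq> (0,0,0)"
  unfolding goodQ_def by (cases Q) auto

lemma same_edge:
  assumes "M \<in> SL2Z" "M' \<in> SL2Z" "fcomp Q1 M = fcomp Q1 M'" "fcomp Q2 M = fcomp Q2 M'"
    "goodQ D1 Q1" "goodQ D2 Q2" "geo (ofi Q1) \<noteq> geo (ofi Q2)"
  shows "mob M ` vline 0 = mob M' ` vline 0"
proof -
  define g where "g = mmul M (minv M')"
  have gS: "g \<in> SL2Z" unfolding g_def using mmul_SL2Z minv_SL2Z assms(1,2) by blast
  have fixQ: "fcomp Q g = Q" if "fcomp Q M = fcomp Q M'" for Q :: "int \<times> int \<times> int"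
  proof -
    have "fcomp Q g = fcomp (fcomp Q M') (minv M')" unfolding g_def fcomp_mmul that ..
    also have "\<dots> = Q" unfolding fcomp_mmul[symmetric] mmul_minv[OF assms(2)] fcomp_id ..
    finally show ?thesis .
  qed
  have f1: "fcomp (ofi Q1) g = ofi Q1" using fixQ[OF assms(3)] fcomp_ofi by metis
  have f2: "fcomp (ofi Q2) g = ofi Q2" using fixQ[OF assms(4)] fcomp_ofi by metis
  have "g = (1,0,0,1) \<or> g = (-1,0,0,-1)"
  proof (rule ccontr)
    assume ng: "\<not> ?thesis"
    obtain m1 where m1: "ofi Q1 = smul m1 (ofi (Fg g))" using plus_class[OF gS f1] ng by blast
    obtain m2 where m2: "ofi Q2 = smul m2 (ofi (Fg g))" using plus_class[OF gS f2] ng by blast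
    have "m1 \<noteq> 0" using m1 goodQ_nz[OF assms(5)] by (cases "Fg g") auto
    have "m2 \<noteq> 0" using m2 goodQ_nz[OF assms(6)] by (cases "Fg g") auto
    have "geo (ofi Q1) = geo (ofi (Fg g))" using m1 geo_smul[OF \<open>m1 \<noteq> 0\<close>] by simp
    moreover have "geo (ofi Q2) = geo (ofi (Fg g))" using m2 geo_smul[OF \<open>m2 \<noteq> 0\<close>] by simp
    ultimately show False using assms(7) by simp
  qed
  moreover have "mmul g M' = M" unfolding g_def mmul_assoc minv_mmul[OF assms(2)] by (cases M) simp
  ultimately have "M = M' \<or> M = mneg M'" by (cases M') auto
  then show ?thesis using mob_mneg by (metis image_cong)
qed

theorem mainTheorem12:
  fixes \<Gamma> :: "complex set set"
  assumes "modular_pattern \<Gamma>"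
  shows "\<exists>m::int. \<forall>f1\<in>refl_group. \<forall>f2\<in>refl_group.
           int (comb_dist f1 f2) \<ge> m \<longrightarrow>
           (\<forall>L1\<in>\<Gamma>. \<forall>L2\<in>\<Gamma>.
              L1 \<inter> f1 ` T0 \<noteq> {} \<and> L1 \<inter> f2 ` T0 \<noteq> {} \<and>
              L2 \<inter> f1 ` T0 \<noteq> {} \<and> L2 \<inter> f2 ` T0 \<noteq> {} \<longrightarrow> L1 = L2)"
proof -
  obtain D where D: "\<forall>L\<in>\<Gamma>. \<exists>Q. L = geo (ofi Q) \<and> goodQ D Q" using pattern_classify[OF assms] by blast
  define BB where "BB = box D \<times> box D"
  have finBB: "finite BB" unfolding BB_def box_def by simp
  show ?thesis
  proof (rule exI[of _ "int (card BB) + 1"], intro ballI impI)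
    fix f1 f2 L1 L2
    assume f1: "f1 \<in> refl_group" and f2: "f2 \<in> refl_group"
      and cd: "int (comb_dist f1 f2) \<ge> int (card BB) + 1"
      and L1: "L1 \<in> \<Gamma>" and L2: "L2 \<in> \<Gamma>"
      and meet: "L1 \<inter> f1 ` T0 \<noteq> {} \<and> L1 \<inter> f2 ` T0 \<noteq> {} \<and> L2 \<inter> f1 ` T0 \<noteq> {} \<and> L2 \<inter> f2 ` T0 \<noteq> {}"
    show "L1 = L2"
    proof (rule ccontr)
      assume ne: "L1 \<noteq> L2"
      obtain Q1 where Q1: "L1 = geo (ofi Q1)" "goodQ D Q1" using D L1 by blast
      obtain Q2 where Q2: "L2 = geo (ofi Q2)" "goodQ D Q2" using D L2 by blast
      obtain M1 where M1: "M1 \<in> SL2Z" "f1 T0_center = mob M1 T0_center" "\<forall>w\<in>f1 ` T0. \<exists>t\<in>T0. w = mob M1 t"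
        using tile_rep[OF f1] by blast
      obtain M2 where M2: "M2 \<in> SL2Z" "f2 T0_center = mob M2 T0_center" "\<forall>w\<in>f2 ` T0. \<exists>t\<in>T0. w = mob M2 t"
        using tile_rep[OF f2] by blast
      have pts: "\<exists>w1 t1 w2 t2. w1 \<in> L \<and> w1 = mob M1 t1 \<and> t1 \<in> T0 \<and> w2 \<in> L \<and> w2 = mob M2 t2 \<and> t2 \<in> T0"
        if h1: "L \<inter> f1 ` T0 \<noteq> {}" and h2: "L \<inter> f2 ` T0 \<noteq> {}" for L
      proof -
        obtain w1 where "w1 \<in> L" "w1 \<in> f1 ` T0" using h1 by blast
        moreover obtain w2 where "w2 \<in> L" "w2 \<in> f2 ` T0" using h2 by blast
        ultimately show ?thesis using M1(3) M2(3) by blast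
      qed
      obtain w11 t11 w12 t12 where P1: "w11 \<in> L1" "w11 = mob M1 t11" "t11 \<in> T0" "w12 \<in> L1" "w12 = mob M2 t12" "t12 \<in> T0"
        using pts[of L1] meet by blast
      obtain w21 t21 w22 t22 where P2: "w21 \<in> L2" "w21 = mob M1 t21" "t21 \<in> T0" "w22 \<in> L2" "w22 = mob M2 t22" "t22 \<in> T0"
        using pts[of L2] meet by blast
      define X where "X = {E \<in> tiling_edges. E \<inter> hseg (f1 T0_center) (f2 T0_center) \<noteq> {}}"
      have cdX: "comb_dist f1 f2 = card X" by (simp add: comb_dist_def X_def)
      define ME where "ME E = (SOME M. M \<in> SL2Z \<and> E = mob M ` vline 0)" for E
      have ME: "ME E \<in> SL2Z \<and> E = mob (ME E) ` vline 0" if "E \<in> tiling_edges" for E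
        unfolding ME_def using someI_ex[OF edge_rep[OF that, unfolded Bex_def]] .
      define phi where "phi E = (fcomp Q1 (ME E), fcomp Q2 (ME E))" for E
      have maps: "phi ` X \<subseteq> BB"
      proof
        fix y assume "y \<in> phi ` X"
        then obtain E where E: "E \<in> X" "y = phi E" by blast
        have Et: "E \<in> tiling_edges" using E(1) X_def by blast
        have "E \<inter> hseg (mob M1 T0_center) (mob M2 T0_center) \<noteq> {}"
          using E(1) M1(2) M2(2) unfolding X_def by simp
        then obtain u where u: "u \<in> E" "u \<in> hseg (mob M1 T0_center) (mob M2 T0_center)"
          by blast
        obtain v where v: "v \<in> vline 0" "u = mob (ME E) v" using ME[OF Et] u(1) by blast
        have vh: "mob (ME E) v \<in> hseg (mob M1 T0_center) (mob M2 T0_center)" using u(2) v(2) by simp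
        have "fcomp Q1 (ME E) \<in> box D"
          using edge_cross[OF Q1(2) Q1(1) M1(1) M2(1) P1 conjunct1[OF ME[OF Et]] v(1) vh] .
        moreover have "fcomp Q2 (ME E) \<in> box D"
          using edge_cross[OF Q2(2) Q2(1) M1(1) M2(1) P2 conjunct1[OF ME[OF Et]] v(1) vh] .
        ultimately show "y \<in> BB" unfolding E(2) phi_def BB_def by simp
      qed
      have inj: "inj_on phi X"
      proof (rule inj_onI)
        fix E E' assume EE: "E \<in> X" "E' \<in> X" "phi E = phi E'"
        have Et: "E \<in> tiling_edges" "E' \<in> tiling_edges" using EE(1,2) X_def by blast+
        have "mob (ME E) ` vline 0 = mob (ME E') ` vline 0"
          using same_edge[OF conjunct1[OF ME[OF Et(1)]] conjunct1[OF ME[OF Et(2)]] _ _ Q1(2) Q2(2)] EE(3) ne Q1(1) Q2(1)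
          unfolding phi_def by simp
        then show "E = E'" using ME[OF Et(1)] ME[OF Et(2)] by simp
      qed
      have "card X \<le> card BB" using card_inj_on_le[OF inj maps finBB] .
      then show False using cd cdX by simp
    qed
  qed
qed

end
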